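(* Let $u$ be a one-sided Sturmian sequence, with $(X_u^+,\sigma)$ its associated Sturmian system and left special sequence $l=l_1l_2\dots$, $L_n=l_1\dots l_n$. Then for each $n\ge2$ there are exactly two significant blocks of $\tilde X_u$ of length $n$, namely $0L_{n-1}=0l_1\dots l_{n-1}$ and $1L_{n-1}=1l_1\dots l_{n-1}$.
   Context: A sequence $u\in\{0,1\}^{\mathbb N}$ is Sturmian if for every $n\ge1$ exactly $n+1$ distinct blocks of length $n$ occur in $u$. $X_u^+$ is the closure of $\{\sigma^n u:n\in\mathbb N\}$, $\sigma$ the shift $(\sigma x)_i=x_{i+1}$, and $\tilde X_u=\{x\in\{0,1\}^{\mathbb Z}: x_px_{p+1}\dots\in X_u^+\ \forall p\}$ its natural extension; the languages of $u$, $X_u^+$ and $\tilde X_u$ coincide. For each $n$ there is a unique block $L_n$ of length $n$ with $0L_n$ and $1L_n$ both in the language; these are the prefixes of an infinite sequence $l$ (the left special sequence). For a block $a_{-n}\dots a_0$ in the language, $\mathrm{fol}(a_{-n}\dots a_0)=\{b_0b_1\dots\in X_u^+:\exists b\in\tilde X_u,\ b_{-n}\dots b_0=a_{-n}\dots a_0\}$. A block $a_{-n}\dots a_0$ ($n\ge1$) is significant if $\mathrm{fol}(a_{-n}\dots a_0)\subsetneq\mathrm{fol}(a_{-n+1}\dots a_0)$. *)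

theory Defs
  imports "HOL-Analysis.Analysis"
begin

text \<open>One-sided sequences over {0,1} are functions nat => nat (values 0,1);
  two-sided sequences are functions int => nat.
  The space nat => nat carries the product topology (discrete topology on nat).\<close>

definition blocks :: "(nat \<Rightarrow> nat) \<Rightarrow> nat \<Rightarrow> nat list set" where
  "blocks u n = {map (\<lambda>j. u (i + j)) [0..<n] | i. True}"

definition lang :: "(nat \<Rightarrow> nat) \<Rightarrow> nat list set" where
  "lang u = (\<Union>n. blocks u n)"

definition sturmian :: "(nat \<Rightarrow> nat) \<Rightarrow> bool" where
  "sturmian u \<longleftrightarrow> (\<forall>i. u i \<in> {0, 1}) \<and> (\<forall>n\<ge>1. card (blocks u n) = n + 1)"

definition shift :: "(nat \<Rightarrow> nat) \<Rightarrow> (nat \<Rightarrow> nat)" where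
  "shift x = (\<lambda>i. x (Suc i))"

definition Xplus :: "(nat \<Rightarrow> nat) \<Rightarrow> (nat \<Rightarrow> nat) set" where
  "Xplus u = closure (range (\<lambda>n. (shift ^^ n) u))"

definition Xtilde :: "(nat \<Rightarrow> nat) \<Rightarrow> (int \<Rightarrow> nat) set" where
  "Xtilde u = {x. \<forall>p::int. (\<lambda>i::nat. x (p + int i)) \<in> Xplus u}"

text \<open>The block a = a_{-n} ... a_0 is the list [a_{-n},...,a_0] of length n+1.\<close>
definition fol :: "(nat \<Rightarrow> nat) \<Rightarrow> nat list \<Rightarrow> (nat \<Rightarrow> nat) set" where
  "fol u a = {y \<in> Xplus u. \<exists>x \<in> Xtilde u. (\<forall>i::nat. x (int i) = y i) \<and>
      (\<forall>k<length a. x (int k - int (length a - 1)) = a ! k)}"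

definition significant :: "(nat \<Rightarrow> nat) \<Rightarrow> nat list \<Rightarrow> bool" where
  "significant u a \<longleftrightarrow> length a \<ge> 2 \<and> a \<in> lang u \<and> fol u a \<subset> fol u (tl a)"

definition left_special :: "(nat \<Rightarrow> nat) \<Rightarrow> nat \<Rightarrow> nat list" where
  "left_special u n = (THE w. length w = n \<and> 0 # w \<in> lang u \<and> 1 # w \<in> lang u)"

end

theory Submission
  imports Defs
begin


lemma closure_char:
  fixes S :: "(nat \<Rightarrow> nat) set"
  shows "y \<in> closure S \<longleftrightarrow> (\<forall>k. \<exists>f\<in>S. \<forall>j<k. f j = y j)"
proof
  assume y: "y \<in> closure S"
  show "\<forall>k. \<exists>f\<in>S. \<forall>j<k. f j = y j"
  proof
    fix k
    have o: "open {f::nat\<Rightarrow>nat. \<forall>i\<in>{..<k}. f (id i) \<in> {y i}}"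
      by (rule product_topology_basis') (auto intro: open_discrete)
    have "y \<in> {f::nat\<Rightarrow>nat. \<forall>i\<in>{..<k}. f (id i) \<in> {y i}}" by simp
    then have "S \<inter> {f::nat\<Rightarrow>nat. \<forall>i\<in>{..<k}. f (id i) \<in> {y i}} \<noteq> {}"
      using y o unfolding closure_iff_nhds_not_empty by blast
    then show "\<exists>f\<in>S. \<forall>j<k. f j = y j" by auto
  qed
next
  assume H: "\<forall>k. \<exists>f\<in>S. \<forall>j<k. f j = y j"
  show "y \<in> closure S"
    unfolding closure_iff_nhds_not_empty
  proof (intro allI impI)
    fix A T assume TA: "T \<subseteq> A" and oT: "open T" and yT: "y \<in> T"
    from oT have "openin (product_topology (\<lambda>i. euclidean) UNIV) T" by (simp add: open_fun_def)
    then obtain U where U: "finite {i \<in> UNIV. U i \<noteq> topspace (euclidean::nat topology)}"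
       "y \<in> Pi\<^sub>E UNIV U" "Pi\<^sub>E UNIV U \<subseteq> T"
      using yT unfolding openin_product_topology_alt by blast
    then obtain k where k: "{i. U i \<noteq> UNIV} \<subseteq> {..<k}"
      using finite_nat_bounded[OF U(1)[simplified]] by auto
    obtain f where f: "f \<in> S" "\<forall>j<k. f j = y j" using H by blast
    have "f \<in> Pi\<^sub>E UNIV U"
    proof -
      have "f i \<in> U i" for i
      proof (cases "U i = UNIV")
        case False then have "i < k" using k by auto
        then show ?thesis using f U(2) by (auto simp: PiE_iff)
      qed auto
      then show ?thesis by (auto simp: PiE_iff)
    qed
    then show "S \<inter> A \<noteq> {}" using f U(3) TA by blast
  qed
qed

definition occ :: "(nat \<Rightarrow> nat) \<Rightarrow> nat list \<Rightarrow> nat \<Rightarrow> bool" where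
  "occ u w i \<longleftrightarrow> (\<forall>j<length w. u (i + j) = w ! j)"

lemma blocks_occ: "w \<in> blocks u n \<longleftrightarrow> length w = n \<and> (\<exists>i. occ u w i)"
proof
  assume "w \<in> blocks u n"
  then obtain i where "w = map (\<lambda>j. u (i + j)) [0..<n]" unfolding blocks_def by blast
  then show "length w = n \<and> (\<exists>i. occ u w i)" unfolding occ_def by auto
next
  assume "length w = n \<and> (\<exists>i. occ u w i)"
  then obtain i where "length w = n" "occ u w i" by blast
  then have "w = map (\<lambda>j. u (i + j)) [0..<n]" unfolding occ_def
    by (intro nth_equalityI) auto
  then show "w \<in> blocks u n" unfolding blocks_def by blast
qed

lemma lang_occ: "w \<in> lang u \<longleftrightarrow> (\<exists>i. occ u w i)"
  unfolding lang_def using blocks_occ by blast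

lemma lang_blocks: "w \<in> lang u \<longleftrightarrow> w \<in> blocks u (length w)"
  using lang_occ blocks_occ by blast

lemma lang_infix:
  assumes "xs @ ys @ zs \<in> lang u" shows "ys \<in> lang u"
proof -
  obtain i where i: "occ u (xs @ ys @ zs) i" using assms lang_occ by blast
  have "occ u ys (i + length xs)"
    unfolding occ_def
  proof (intro allI impI)
    fix j assume "j < length ys"
    then have "u (i + (length xs + j)) = (xs @ ys @ zs) ! (length xs + j)"
      using i unfolding occ_def by auto
    then show "u (i + length xs + j) = ys ! j" using \<open>j < length ys\<close>
      by (simp add: nth_append add.assoc)
  qed
  then show ?thesis using lang_occ by blast
qed

lemma lang_Cons: "c # w \<in> lang u \<Longrightarrow> w \<in> lang u"
  using lang_infix[of "[c]" w "[]"] by simp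

lemma lang_prefix: "w @ v \<in> lang u \<Longrightarrow> w \<in> lang u"
  using lang_infix[of "[]" w v] by simp

lemma shift_pow: "(shift ^^ n) u = (\<lambda>j. u (n + j))"
  by (induction n) (auto simp: shift_def)

lemma Xplus_char: "y \<in> Xplus u \<longleftrightarrow> (\<forall>k. \<exists>i. \<forall>j<k. y j = u (i + j))"
  unfolding Xplus_def closure_char shift_pow by (auto; metis)

lemma Xplus_lang: "y \<in> Xplus u \<longleftrightarrow> (\<forall>k. map y [0..<k] \<in> lang u)"
  unfolding Xplus_char lang_occ occ_def by (auto; metis)

definition win :: "(int \<Rightarrow> nat) \<Rightarrow> int \<Rightarrow> nat \<Rightarrow> nat list" where
  "win x p k = map (\<lambda>j. x (p + int j)) [0..<k]"

lemma Xtilde_char: "x \<in> Xtilde u \<longleftrightarrow> (\<forall>p k. win x p k \<in> lang u)"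
  unfolding Xtilde_def Xplus_lang win_def by auto




lemma st_vals: "sturmian u \<Longrightarrow> u i \<in> {0, 1}"
  unfolding sturmian_def by blast

lemma blocks_subA: "range u \<subseteq> A \<Longrightarrow> blocks u n \<subseteq> {w. set w \<subseteq> A \<and> length w = n}"
  unfolding blocks_def by (auto simp: image_subset_iff)

lemma blocks_sub01: "(\<forall>i. u i \<in> {0,1}) \<Longrightarrow> blocks u n \<subseteq> {w. set w \<subseteq> {0,1} \<and> length w = n}"
  by (rule blocks_subA) (simp add: image_subset_iff)

lemma blocks_finite: "(\<forall>i. u i \<in> {0,1}) \<Longrightarrow> finite (blocks u n)"
  by (rule finite_subset[OF blocks_sub01]) (auto intro: finite_lists_length_eq)

lemma lang_vals:
  assumes "sturmian u" "w \<in> lang u" shows "set w \<subseteq> {0,1}"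
proof -
  have "\<forall>i. u i \<in> {0,1}" using assms(1) unfolding sturmian_def by blast
  moreover have "w \<in> blocks u (length w)" using assms(2) lang_blocks by blast
  ultimately show ?thesis using blocks_sub01[of u "length w"] by blast
qed

lemma blocks_0: "blocks u 0 = {[]}"
  unfolding blocks_def by auto

lemma card_blocks: "sturmian u \<Longrightarrow> card (blocks u n) = n + 1"
  unfolding sturmian_def by (cases "n = 0") (auto simp: blocks_0)

lemma evper_blocks:
  assumes P: "P > 0" and per: "\<forall>t\<ge>N. u (t + P) = u t"
  shows "blocks u n \<subseteq> (\<lambda>i. map (\<lambda>j. u (i + j)) [0..<n]) ` {..<N+P}"
proof -
  have "\<exists>i'<N+P. map (\<lambda>j. u (i + j)) [0..<n] = map (\<lambda>j. u (i' + j)) [0..<n]" for i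
  proof (induction i rule: less_induct)
    case (less i)
    show ?case
    proof (cases "i < N + P")
      case True then show ?thesis by blast
    next
      case False
      then have "i - P < i" "i - P \<ge> N" using P by auto
      have "u (i + j) = u (i - P + j)" for j
        using per[rule_format, of "i - P + j"] \<open>i - P \<ge> N\<close> False by auto
      then have "map (\<lambda>j. u (i + j)) [0..<n] = map (\<lambda>j. u (i - P + j)) [0..<n]" by simp
      then show ?thesis using less.IH[OF \<open>i - P < i\<close>] by metis
    qed
  qed
  then show ?thesis unfolding blocks_def by blast
qed

lemma st_not_evper:
  assumes st: "sturmian u" and P: "P > 0" and per: "\<forall>t\<ge>N. u (t + P) = u t"
  shows False
proof -
  have "card (blocks u (N+P)) \<le> card ((\<lambda>i. map (\<lambda>j. u (i + j)) [0..<N+P]) ` {..<N+P})"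
    using evper_blocks[OF P per] by (intro card_mono) auto
  also have "\<dots> \<le> N + P" using card_image_le[of "{..<N+P}"] by auto
  finally show False using card_blocks[OF st] by simp
qed

lemma take_blocks: "blocks v j = take j ` blocks v (Suc j)"
proof
  show "blocks v j \<subseteq> take j ` blocks v (Suc j)"
  proof
    fix w assume "w \<in> blocks v j"
    then obtain i where w: "w = map (\<lambda>t. v (i + t)) [0..<j]" unfolding blocks_def by blast
    have "w = take j (map (\<lambda>t. v (i + t)) [0..<Suc j])" unfolding w by (simp add: take_map)
    moreover have "map (\<lambda>t. v (i + t)) [0..<Suc j] \<in> blocks v (Suc j)" unfolding blocks_def by blast
    ultimately show "w \<in> take j ` blocks v (Suc j)" by blast
  qed
next
  show "take j ` blocks v (Suc j) \<subseteq> blocks v j"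
  proof
    fix w assume "w \<in> take j ` blocks v (Suc j)"
    then obtain i where w: "w = take j (map (\<lambda>t. v (i + t)) [0..<Suc j])" unfolding blocks_def by blast
    have "w = map (\<lambda>t. v (i + t)) [0..<j]" unfolding w by (simp add: take_map)
    then show "w \<in> blocks v j" unfolding blocks_def by blast
  qed
qed

lemma MH:
  assumes fin: "\<And>n. finite (blocks v n)" and k: "card (blocks v k) \<le> k"
  shows "\<exists>N P. P > 0 \<and> (\<forall>t\<ge>N. v (t + P) = v t)"
proof -
  have mono: "card (blocks v j) \<le> card (blocks v (Suc j))" for j
    using card_image_le[OF fin, of "take j" "Suc j"] take_blocks[of v j] by simp
  obtain j where j: "card (blocks v j) = card (blocks v (Suc j))"
  proof (rule ccontr)
    assume "\<not> thesis"
    then have lt: "card (blocks v j) < card (blocks v (Suc j))" for j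
    proof -
      have "card (blocks v j) \<noteq> card (blocks v (Suc j))" using that \<open>\<not> thesis\<close> by blast
      then show ?thesis using mono[of j] by linarith
    qed
    have ge: "card (blocks v j) \<ge> j + 1" for j
    proof (induction j)
      case 0 then show ?case by (simp add: blocks_0)
    next
      case (Suc j) then show ?case using lt[of j] by simp
    qed
    show False using ge[of k] k by simp
  qed
  have inj: "inj_on (take j) (blocks v (Suc j))"
  proof -
    have "card (take j ` blocks v (Suc j)) = card (blocks v (Suc j))" using j take_blocks[of v j] by simp
    then show ?thesis by (rule eq_card_imp_inj_on[OF fin])
  qed
  define W where "W i = map (\<lambda>t. v (i + t)) [0..<Suc j]" for i
  have Wb: "W i \<in> blocks v (Suc j)" for i unfolding W_def blocks_def by blast
  have Wt: "take j (W (Suc i)) = drop 1 (W i)" for i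
    unfolding W_def by (intro nth_equalityI) (simp_all del: upt_Suc)
  have Wstep: "W a = W b \<Longrightarrow> W (Suc a) = W (Suc b)" for a b
  proof -
    assume "W a = W b"
    then have "take j (W (Suc a)) = take j (W (Suc b))" using Wt by simp
    then show ?thesis using inj_onD[OF inj _ Wb Wb] by blast
  qed
  have "\<not> inj W"
  proof
    assume "inj W"
    then have "\<not> finite (range W)" using finite_imageD[of W UNIV] by auto
    moreover have "range W \<subseteq> blocks v (Suc j)" using Wb by blast
    ultimately show False using fin finite_subset by blast
  qed
  then obtain a b where ab: "a \<noteq> b" "W a = W b" unfolding inj_def by blast
  have "\<exists>a b. a < b \<and> W a = W b"
  proof (cases "a < b")
    case True thus ?thesis using ab by blast
  next
    case False hence "b < a" using ab(1) by simp
    thus ?thesis using ab(2) by (intro exI[of _ b] exI[of _ a]) simp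
  qed
  then obtain a b where ab: "a < b" "W a = W b" by blast
  have Wt2: "W (a + t) = W (b + t)" for t
  proof (induction t)
    case 0 then show ?case using ab(2) by simp
  next
    case (Suc t) then show ?case using Wstep[OF Suc.IH] by simp
  qed
  have vt: "v (a + t) = v (b + t)" for t
    using arg_cong[OF Wt2[of t], of "\<lambda>l. l ! 0"] unfolding W_def by (simp del: upt_Suc)
  show ?thesis
  proof (intro exI conjI allI impI)
    show "b - a > 0" using ab by simp
    fix t assume "t \<ge> a"
    then have e: "t + (b - a) = b + (t - a)" "a + (t - a) = t" using ab by auto
    show "v (t + (b - a)) = v t" using vt[of "t - a"] by (simp only: e)
  qed
qed

lemma recur:
  assumes st: "sturmian u" and w: "w \<in> lang u"
  shows "\<exists>i\<ge>M. occ u w i"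
proof (rule ccontr)
  assume no: "\<not> (\<exists>i\<ge>M. occ u w i)"
  define v where "v = (\<lambda>i. u (M + i))"
  have vv: "\<forall>i. v i \<in> {0,1}" unfolding v_def using st_vals[OF st] by blast
  have sub: "blocks v n \<subseteq> blocks u n" for n
  proof
    fix x assume "x \<in> blocks v n"
    then obtain i where "length x = n" "occ v x i" using blocks_occ by blast
    then have "occ u x (M + i)" unfolding occ_def v_def by (simp add: add.assoc)
    then show "x \<in> blocks u n" using blocks_occ \<open>length x = n\<close> by blast
  qed
  have "w \<notin> blocks v (length w)"
  proof
    assume "w \<in> blocks v (length w)"
    then obtain i where "occ v w i" using blocks_occ by blast
    then have "occ u w (M + i)" unfolding occ_def v_def by (simp add: add.assoc)
    then show False using no by auto
  qed
  moreover have "w \<in> blocks u (length w)" using w lang_blocks by blast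
  ultimately have "blocks v (length w) \<subset> blocks u (length w)" using sub by blast
  then have "card (blocks v (length w)) < card (blocks u (length w))"
    using psubset_card_mono blocks_finite st_vals[OF st] by blast
  then have "card (blocks v (length w)) \<le> length w" using card_blocks[OF st] by simp
  then obtain N P where NP: "P > 0" "\<forall>t\<ge>N. v (t + P) = v t"
    using MH[of v, OF blocks_finite[OF vv]] by blast
  have "\<forall>t\<ge>M + N. u (t + P) = u t"
  proof (intro allI impI)
    fix t assume "t \<ge> M + N"
    then show "u (t + P) = u t" using NP(2)[rule_format, of "t - M"] unfolding v_def by simp
  qed
  then show False by (rule st_not_evper[OF st NP(1)])
qed




lemma st_vals': "sturmian u \<Longrightarrow> \<forall>i. u i \<in> {0,1}"
  unfolding sturmian_def by blast

lemma win_lang: "map (\<lambda>j. u (i + j)) [0..<K] \<in> lang u"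
  unfolding lang_occ occ_def by (intro exI[of _ i]) simp

lemma occ_split:
  assumes "occ u p i" "length p \<le> K"
  shows "map (\<lambda>j. u (i + j)) [0..<K] = p @ map (\<lambda>j. u (i + j)) [length p..<K]"
  using assms unfolding occ_def
  by (intro nth_equalityI) (auto simp: nth_append)

lemma Cons_blocks: "c # w \<in> blocks u (Suc m) \<longleftrightarrow> c # w \<in> lang u \<and> length w = m"
proof
  assume h: "c # w \<in> blocks u (Suc m)"
  then have "length w = m" using blocks_occ[of "c # w" u "Suc m"] by simp
  then show "c # w \<in> lang u \<and> length w = m" using h lang_blocks[of "c # w" u] by simp
next
  assume "c # w \<in> lang u \<and> length w = m"
  then show "c # w \<in> blocks u (Suc m)" by (metis lang_blocks length_Cons)
qed

lemma ls_card:
  assumes st: "sturmian u"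
  shows "card {w. length w = m \<and> 0 # w \<in> lang u \<and> 1 # w \<in> lang u} = 1"
proof -
  have vals: "\<forall>i. u i \<in> {0,1}" using st_vals'[OF st] .
  define A where "A c = {w. c # w \<in> blocks u (Suc m)}" for c :: nat
  define B where "B = blocks u (Suc m)"
  have finB: "finite B" unfolding B_def using blocks_finite[OF vals] .
  have B: "B = Cons 0 ` A 0 \<union> Cons 1 ` A 1"
  proof
    show "B \<subseteq> Cons 0 ` A 0 \<union> Cons 1 ` A 1"
    proof
      fix x assume x: "x \<in> B"
      then have "length x = Suc m" unfolding B_def using blocks_occ[of x u "Suc m"] by simp
      then obtain c w where cw: "x = c # w" by (cases x) auto
      have "set x \<subseteq> {0,1}" using x blocks_sub01[OF vals] unfolding B_def by blast
      then have "c = 0 \<or> c = 1" using cw by auto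
      moreover have "w \<in> A c" using x cw unfolding A_def B_def by simp
      ultimately show "x \<in> Cons 0 ` A 0 \<union> Cons 1 ` A 1" using cw by blast
    qed
  next
    show "Cons 0 ` A 0 \<union> Cons 1 ` A 1 \<subseteq> B" unfolding A_def B_def by auto
  qed
  have finA: "finite (A c)" for c
  proof -
    have "Cons c ` A c \<subseteq> B" unfolding A_def B_def by auto
    then have "finite (Cons c ` A c)" using finB finite_subset by blast
    moreover have "inj_on (Cons c) (A c)" by (simp add: inj_on_def)
    ultimately show ?thesis by (rule finite_imageD)
  qed
  have cardB: "card B = card (A 0) + card (A 1)"
  proof -
    have "card B = card (Cons 0 ` A 0) + card (Cons 1 ` A 1)"
      unfolding B by (rule card_Un_disjoint) (use finA in auto)
    also have "\<dots> = card (A 0) + card (A 1)"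
      by (simp add: card_image)
    finally show ?thesis .
  qed
  have U: "A 0 \<union> A 1 = blocks u m"
  proof
    show "A 0 \<union> A 1 \<subseteq> blocks u m"
    proof
      fix w assume "w \<in> A 0 \<union> A 1"
      then obtain c where "c # w \<in> blocks u (Suc m)" unfolding A_def by blast
      then have "c # w \<in> lang u" "length w = m" using Cons_blocks[of c w u m] by simp_all
      then show "w \<in> blocks u m" using lang_Cons[of c w u] lang_blocks[of w u] by simp
    qed
  next
    show "blocks u m \<subseteq> A 0 \<union> A 1"
    proof
      fix w assume w: "w \<in> blocks u m"
      have lw: "length w = m" using blocks_occ[of w u m] w by simp
      have wl: "w \<in> lang u" using lang_blocks[of w u] lw w by simp
      obtain i where i: "i \<ge> 1" "occ u w i" using recur[OF st wl, of 1] by blast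
      have "occ u (u (i - 1) # w) (i - 1)" using i unfolding occ_def
      proof (intro allI impI)
        fix j assume j: "j < length (u (i - 1) # w)"
        show "u (i - 1 + j) = (u (i - 1) # w) ! j"
        proof (cases j)
          case 0 then show ?thesis by simp
        next
          case (Suc j')
          then have "j' < length w" using j by simp
          then have "u (i + j') = w ! j'" using i(2) unfolding occ_def by blast
          moreover have "i - 1 + j = i + j'" using Suc i(1) by simp
          ultimately show ?thesis by (simp add: Suc)
        qed
      qed
      then have "u (i - 1) # w \<in> blocks u (Suc m)" using blocks_occ[of "u (i - 1) # w" u "Suc m"] lw by auto
      moreover have "u (i - 1) = 0 \<or> u (i - 1) = 1" using vals by auto
      ultimately show "w \<in> A 0 \<union> A 1" unfolding A_def by auto
    qed
  qed
  have I: "A 0 \<inter> A 1 = {w. length w = m \<and> 0 # w \<in> lang u \<and> 1 # w \<in> lang u}"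
    unfolding A_def Cons_blocks by blast
  have "card (A 0) + card (A 1) = card (A 0 \<union> A 1) + card (A 0 \<inter> A 1)"
    by (rule card_Un_Int) (use finA in auto)
  then show ?thesis using cardB card_blocks[OF st] U I unfolding B_def by simp
qed

lemma ls_single:
  assumes st: "sturmian u"
  obtains z where "{w. length w = m \<and> 0 # w \<in> lang u \<and> 1 # w \<in> lang u} = {z}"
  using ls_card[OF st, of m] that by (rule card_1_singletonE)

lemma ls_unique:
  assumes st: "sturmian u" and "length w = m" "0 # w \<in> lang u" "1 # w \<in> lang u"
    and "length w' = m" "0 # w' \<in> lang u" "1 # w' \<in> lang u"
  shows "w = w'"
proof -
  obtain z where z: "{w. length w = m \<and> 0 # w \<in> lang u \<and> 1 # w \<in> lang u} = {z}"
    using ls_single[OF st] .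
  have "w \<in> {z}" "w' \<in> {z}" unfolding z[symmetric] using assms by simp_all
  then show ?thesis by simp
qed

lemma ls_props:
  assumes st: "sturmian u"
  shows "length (left_special u m) = m \<and> 0 # left_special u m \<in> lang u \<and> 1 # left_special u m \<in> lang u"
proof -
  obtain z where z: "{w. length w = m \<and> 0 # w \<in> lang u \<and> 1 # w \<in> lang u} = {z}"
    using ls_single[OF st] .
  have zP: "z \<in> {w. length w = m \<and> 0 # w \<in> lang u \<and> 1 # w \<in> lang u}" unfolding z by simp
  have "\<exists>!w. length w = m \<and> 0 # w \<in> lang u \<and> 1 # w \<in> lang u"
  proof
    show "length z = m \<and> 0 # z \<in> lang u \<and> 1 # z \<in> lang u" using zP by simp
  next
    fix w assume "length w = m \<and> 0 # w \<in> lang u \<and> 1 # w \<in> lang u"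
    then have "w \<in> {z}" unfolding z[symmetric] by simp
    then show "w = z" by simp
  qed
  then show ?thesis unfolding left_special_def by (rule theI')
qed




lemma nonext:
  assumes st: "sturmian u" and c: "c = 0 \<or> c = 1" and w0: "0 # w \<in> lang u" and w1: "1 # w \<in> lang u"
  shows "\<exists>v. w @ v \<in> lang u \<and> c # w @ v \<notin> lang u"
proof (rule ccontr)
  assume "\<not> ?thesis"
  then have H: "\<And>v. w @ v \<in> lang u \<Longrightarrow> c # w @ v \<in> lang u" by blast
  define c' where "c' = 1 - c"
  have c'w: "c' # w \<in> lang u" using c w0 w1 unfolding c'_def by auto
  have both: "0 # w @ v \<in> lang u \<and> 1 # w @ v \<in> lang u" if "c' # w @ v \<in> lang u" for v
  proof -
    have "w @ v \<in> lang u" using lang_Cons[OF that] .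
    then have "c # w @ v \<in> lang u" by (rule H)
    then show ?thesis using that c unfolding c'_def by auto
  qed
  have uniq: "v1 = v2" if "c' # w @ v1 \<in> lang u" "c' # w @ v2 \<in> lang u" "length v1 = length v2" for v1 v2
  proof -
    have "w @ v1 = w @ v2"
      using ls_unique[OF st, of "w @ v1" "length (w@v1)" "w @ v2"] both[OF that(1)] both[OF that(2)] that(3)
      by simp
    then show ?thesis by simp
  qed
  obtain i where i: "occ u (c' # w) i" using c'w unfolding lang_occ by blast
  obtain i' where i': "i' \<ge> Suc i" "occ u (c' # w) i'" using recur[OF st c'w, of "Suc i"] by blast
  have eq: "u (i + t) = u (i' + t)" for t
  proof -
    define K where "K = t + Suc (length w)"
    have l: "length (c' # w) \<le> K" unfolding K_def by simp
    define v1 where "v1 = map (\<lambda>j. u (i + j)) [length (c' # w)..<K]"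
    define v2 where "v2 = map (\<lambda>j. u (i' + j)) [length (c' # w)..<K]"
    have X1: "map (\<lambda>j. u (i + j)) [0..<K] = (c' # w) @ v1" unfolding v1_def by (rule occ_split[OF i l])
    have X2: "map (\<lambda>j. u (i' + j)) [0..<K] = (c' # w) @ v2" unfolding v2_def by (rule occ_split[OF i'(2) l])
    have "c' # w @ v1 \<in> lang u" using win_lang[of u i K] X1 by simp
    moreover have "c' # w @ v2 \<in> lang u" using win_lang[of u i' K] X2 by simp
    moreover have "length v1 = length v2" unfolding v1_def v2_def by simp
    ultimately have "v1 = v2" by (rule uniq)
    then have m: "map (\<lambda>j. u (i + j)) [0..<K] = map (\<lambda>j. u (i' + j)) [0..<K]" using X1 X2 by simp
    have "t < K" unfolding K_def by simp
    then show ?thesis using arg_cong[OF m, of "\<lambda>l. l ! t"] by simp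
  qed
  have per: "\<forall>t\<ge>i. u (t + (i' - i)) = u t"
  proof (intro allI impI)
    fix t assume "t \<ge> i"
    then have e: "t + (i' - i) = i' + (t - i)" "i + (t - i) = t" using i'(1) by auto
    show "u (t + (i' - i)) = u t" using eq[of "t - i"] by (simp only: e)
  qed
  have "i' - i > 0" using i'(1) by simp
  then show False using per by (rule st_not_evper[OF st])
qed




lemma ext1:
  assumes st: "sturmian u" and z: "z \<in> lang u"
  shows "\<exists>a b. a # z @ [b] \<in> lang u"
proof -
  obtain i where i: "i \<ge> 1" "occ u z i" using recur[OF st z, of 1] by blast
  define a where "a = u (i - 1)"
  define b where "b = u (i + length z)"
  have "occ u (a # z @ [b]) (i - 1)" unfolding occ_def
  proof (intro allI impI)
    fix j assume j: "j < length (a # z @ [b])"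
    show "u (i - 1 + j) = (a # z @ [b]) ! j"
    proof (cases j)
      case 0 then show ?thesis unfolding a_def by simp
    next
      case (Suc j')
      then have e: "i - 1 + j = i + j'" using i(1) by simp
      show ?thesis
      proof (cases "j' < length z")
        case True
        then have "u (i + j') = z ! j'" using i(2) unfolding occ_def by blast
        moreover have "(a # z @ [b]) ! j = z ! j'" using True by (simp add: Suc nth_append)
        ultimately show ?thesis unfolding e by simp
      next
        case False
        then have "j' = length z" using j Suc by simp
        then have "(a # z @ [b]) ! j = b" by (simp add: Suc nth_append)
        then show ?thesis unfolding e b_def using \<open>j' = length z\<close> by simp
      qed
    qed
  qed
  then show ?thesis unfolding lang_occ by blast
qed

lemma extend:
  assumes st: "sturmian u" and w: "w \<in> lang u"
  shows "\<exists>x\<in>Xtilde u. \<forall>j<length w. x (p + int j) = w ! j"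
proof -
  define E where "E z = (SOME y. y \<in> lang u \<and> (\<exists>a b. y = a # z @ [b]))" for z
  have E: "E z \<in> lang u \<and> (\<exists>a b. E z = a # z @ [b])" if zl: "z \<in> lang u" for z
  proof -
    obtain a b where "a # z @ [b] \<in> lang u" using ext1[OF st zl] by blast
    then have "\<exists>y. y \<in> lang u \<and> (\<exists>a b. y = a # z @ [b])" by blast
    then show ?thesis unfolding E_def by (rule someI_ex)
  qed
  define W where "W k = (E ^^ k) w" for k
  have W0: "W 0 = w" unfolding W_def by simp
  have WS: "W (Suc k) = E (W k)" for k unfolding W_def by simp
  have Wl: "W k \<in> lang u \<and> length (W k) = length w + 2 * k" for k
  proof (induction k)
    case 0 then show ?case using w W0 by simp
  next
    case (Suc k)
    then obtain a b where "E (W k) = a # W k @ [b]" "E (W k) \<in> lang u" using E by blast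
    then show ?case using Suc WS[of k] by simp
  qed
  have Wsuc: "W (Suc k) ! Suc j = W k ! j" if "j < length (W k)" for k j
  proof -
    obtain a b where "E (W k) = a # W k @ [b]" using E Wl by blast
    then show ?thesis using that WS[of k] by (simp add: nth_append)
  qed
  have Wshift: "W (k + r) ! (j + r) = W k ! j" if "j < length (W k)" for k j r
  proof (induction r)
    case 0 then show ?case by simp
  next
    case (Suc r)
    have "j + r < length (W (k + r))" using that Wl[of k] Wl[of "k + r"] by simp
    then have "W (Suc (k + r)) ! Suc (j + r) = W (k + r) ! (j + r)" by (rule Wsuc)
    then show ?case using Suc.IH by simp
  qed
  define kk where "kk t = nat \<bar>t - p\<bar> + 1" for t
  define x where "x t = W (kk t) ! nat (t - p + int (kk t))" for t
  have kki: "int (kk t) = \<bar>t - p\<bar> + 1" for t unfolding kk_def by simp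
  have xK: "x t = W K ! nat (t - p + int K)" if K: "K \<ge> kk t" for t K
  proof -
    define r where "r = K - kk t"
    have Kr: "K = kk t + r" unfolding r_def using K by simp
    define j0 where "j0 = nat (t - p + int (kk t))"
    have "int j0 < int (length w) + 2 * int (kk t)" unfolding j0_def using kki[of t] by (simp; arith)
    then have j0l: "j0 < length (W (kk t))" using Wl[of "kk t"] by simp
    have "nat (t - p + int K) = j0 + r" unfolding j0_def Kr using kki[of t] by simp
    then show ?thesis unfolding x_def j0_def[symmetric] Kr using Wshift[OF j0l, of r] by simp
  qed
  have "x \<in> Xtilde u" unfolding Xtilde_char
  proof (intro allI)
    fix q k
    define K where "K = nat \<bar>q - p\<bar> + k + 1"
    define s where "s = nat (q - p + int K)"
    obtain m0 where m0: "occ u (W K) m0" using Wl[of K] unfolding lang_occ by blast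
    have "occ u (win x q k) (m0 + s)" unfolding occ_def
    proof (intro allI impI)
      fix j assume "j < length (win x q k)"
      then have j: "j < k" unfolding win_def by simp
      have "kk (q + int j) \<le> K" unfolding kk_def K_def using j by simp
      then have "x (q + int j) = W K ! nat (q + int j - p + int K)" by (rule xK)
      moreover have "nat (q + int j - p + int K) = s + j" unfolding s_def K_def by simp
      moreover have "s + j < length (W K)" unfolding s_def K_def using Wl[of K] j unfolding K_def by simp
      ultimately have "x (q + int j) = u (m0 + (s + j))" using m0 unfolding occ_def by simp
      then show "u (m0 + s + j) = win x q k ! j" unfolding win_def using j by (simp add: add.assoc)
    qed
    then show "win x q k \<in> lang u" unfolding lang_occ by blast
  qed
  moreover have "\<forall>j<length w. x (p + int j) = w ! j"
  proof (intro allI impI)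
    fix j assume j: "j < length w"
    have "x (p + int j) = W (0 + (j + 1)) ! nat (p + int j - p + int (0 + (j + 1)))"
      by (rule xK) (simp add: kk_def)
    also have "p + int j - p + int (0 + (j + 1)) = int (j + (j + 1))" by simp
    then have "nat (p + int j - p + int (0 + (j + 1))) = j + (j + 1)" by (simp only: nat_int)
    then have "W (0 + (j + 1)) ! nat (p + int j - p + int (0 + (j + 1))) = W (0 + (j + 1)) ! (j + (j + 1))" by (simp only:)
    also have "\<dots> = W 0 ! j" by (rule Wshift) (use j W0 in simp)
    finally show "x (p + int j) = w ! j" using W0 by simp
  qed
  ultimately show ?thesis by blast
qed




theorem proposition4p7:
  fixes u :: "nat \<Rightarrow> nat" and n :: nat
  assumes "sturmian u" and "n \<ge> 2"
  shows "{a. length a = n \<and> significant u a}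
           = {0 # left_special u (n - 1), 1 # left_special u (n - 1)}"
proof -
  have st: "sturmian u" by fact
  define m where "m = n - 1"
  have n: "n = Suc m" "m \<ge> 1" using assms(2) unfolding m_def by auto
  have im: "int (m - 1) = int m - 1" using n(2) by simp
  define L where "L = left_special u m"
  have L: "length L = m" "0 # L \<in> lang u" "1 # L \<in> lang u"
    using ls_props[OF st, of m] unfolding L_def by auto
  have "{a. length a = n \<and> significant u a} = {0 # L, 1 # L}"
  proof (intro equalityI subsetI)
    fix a assume "a \<in> {a. length a = n \<and> significant u a}"
    then have la: "length a = Suc m" and al: "a \<in> lang u" and ps: "fol u a \<subset> fol u (tl a)"
      unfolding significant_def n by auto
    obtain c w where a: "a = c # w" using la by (cases a) auto
    have lw: "length w = m" using la a by simp
    have "set a \<subseteq> {0,1}" using lang_vals[OF st al] .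
    then have c01: "c = 0 \<or> c = 1" using a by auto
    have cw: "c # w \<in> lang u" using al a by simp
    have both: "0 # w \<in> lang u \<and> 1 # w \<in> lang u"
    proof (rule ccontr)
      assume nb: "\<not> (0 # w \<in> lang u \<and> 1 # w \<in> lang u)"
      have "fol u w \<subseteq> fol u a"
      proof
        fix y assume "y \<in> fol u w"
        then obtain x where y: "y \<in> Xplus u" and x: "x \<in> Xtilde u" "\<forall>i. x (int i) = y i"
           "\<forall>k<length w. x (int k - int (length w - 1)) = w ! k" unfolding fol_def by blast
        have wk: "x (int k + 1 - int m) = w ! k" if "k < m" for k
        proof -
          have "int k - int (length w - 1) = int k + 1 - int m" using lw im by simp
          then show ?thesis using x(3) that lw by metis
        qed
        have xw: "win x (- int m) (Suc m) = x (- int m) # w"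
        proof (rule nth_equalityI)
          show "length (win x (- int m) (Suc m)) = length (x (- int m) # w)" unfolding win_def using lw by simp
        next
          fix j assume "j < length (win x (- int m) (Suc m))"
          then have j: "j < Suc m" unfolding win_def by simp
          show "win x (- int m) (Suc m) ! j = (x (- int m) # w) ! j"
          proof (cases j)
            case 0 then show ?thesis unfolding win_def by (simp del: upt_Suc)
          next
            case (Suc k)
            then have "k < m" using j by simp
            have "win x (- int m) (Suc m) ! j = x (- int m + int j)" unfolding win_def using j by (simp del: upt_Suc)
            also have "- int m + int j = int k + 1 - int m" using Suc by simp
            finally show ?thesis using wk[OF \<open>k < m\<close>] Suc by simp
          qed
        qed
        have "win x (- int m) (Suc m) \<in> lang u" using x(1) unfolding Xtilde_char by blast
        then have dw: "x (- int m) # w \<in> lang u" using xw by simp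
        have "set (x (- int m) # w) \<subseteq> {0,1}" using lang_vals[OF st dw] .
        then have "x (- int m) = 0 \<or> x (- int m) = 1" by auto
        then have xc: "x (- int m) = c" using nb dw cw c01 by auto
        have "\<forall>k<length a. x (int k - int (length a - 1)) = a ! k"
        proof (intro allI impI)
          fix k assume k: "k < length a"
          show "x (int k - int (length a - 1)) = a ! k"
          proof (cases k)
            case 0 then show ?thesis using xc a la by simp
          next
            case (Suc k')
            then have "k' < m" using k la by simp
            have "int k - int (length a - 1) = int k' + 1 - int m" using Suc la by simp
            then have "x (int k - int (length a - 1)) = w ! k'" using wk[OF \<open>k' < m\<close>] by (simp only:)
            then show ?thesis using Suc a by simp
          qed
        qed
        then show "y \<in> fol u a" unfolding fol_def using y x(1,2) by blast
      qed
      then show False using ps a by auto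
    qed
    have "w = L" using ls_unique[OF st lw _ _ L(1)] both L(2,3) by blast
    then show "a \<in> {0 # L, 1 # L}" using a c01 by auto
  next
    fix a assume "a \<in> {0 # L, 1 # L}"
    then obtain c where a: "a = c # L" and c01: "c = 0 \<or> c = 1" by auto
    have al: "a \<in> lang u" using a c01 L by auto
    have sub: "fol u a \<subseteq> fol u L"
    proof
      fix y assume "y \<in> fol u a"
      then obtain x where y: "y \<in> Xplus u" and x: "x \<in> Xtilde u" "\<forall>i. x (int i) = y i"
           "\<forall>k<length a. x (int k - int (length a - 1)) = a ! k" unfolding fol_def by blast
      have "\<forall>k<length L. x (int k - int (length L - 1)) = L ! k"
      proof (intro allI impI)
        fix k assume k: "k < length L"
        have e: "int k - int (length L - 1) = int (Suc k) - int (length a - 1)" using a L(1) im by simp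
        have "Suc k < length a" using a k by simp
        then have "x (int (Suc k) - int (length a - 1)) = a ! Suc k" using x(3) by blast
        then show "x (int k - int (length L - 1)) = L ! k" unfolding e using a by simp
      qed
      then show "y \<in> fol u L" unfolding fol_def using y x(1,2) by blast
    qed
    obtain v where v: "L @ v \<in> lang u" "c # L @ v \<notin> lang u"
      using nonext[OF st c01 L(2) L(3)] by blast
    obtain x where x: "x \<in> Xtilde u" "\<forall>j<length (L @ v). x (1 - int m + int j) = (L @ v) ! j"
      using extend[OF st v(1), of "1 - int m"] by blast
    define y where "y i = x (int i)" for i
    have "(\<lambda>i. x (0 + int i)) \<in> Xplus u" using x(1) unfolding Xtilde_def by blast
    then have yX: "y \<in> Xplus u" unfolding y_def by simp
    have "\<forall>k<length L. x (int k - int (length L - 1)) = L ! k"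
    proof (intro allI impI)
      fix k assume k: "k < length L"
      have e: "int k - int (length L - 1) = 1 - int m + int k" using L(1) im by simp
      have "(L @ v) ! k = L ! k" using k by (simp add: nth_append)
      moreover have "k < length (L @ v)" using k by simp
      then have "x (1 - int m + int k) = (L @ v) ! k" using x(2) by blast
      ultimately show "x (int k - int (length L - 1)) = L ! k" unfolding e by simp
    qed
    moreover have "\<forall>i. x (int i) = y i" by (simp add: y_def)
    ultimately have yL: "y \<in> fol u L" unfolding fol_def using yX x(1) by blast
    have "y \<notin> fol u a"
    proof
      assume "y \<in> fol u a"
      then obtain x' where x': "x' \<in> Xtilde u" "\<forall>i. x' (int i) = y i"
           "\<forall>k<length a. x' (int k - int (length a - 1)) = a ! k" unfolding fol_def by blast
      have "win x' (- int m) (Suc m + length v) = c # L @ v"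
      proof (rule nth_equalityI)
        show "length (win x' (- int m) (Suc m + length v)) = length (c # L @ v)"
          unfolding win_def using L(1) by simp
      next
        fix j assume "j < length (win x' (- int m) (Suc m + length v))"
        then have j: "j < Suc m + length v" unfolding win_def by simp
        have wj: "win x' (- int m) (Suc m + length v) ! j = x' (- int m + int j)"
          unfolding win_def using j by (simp del: upt_Suc)
        show "win x' (- int m) (Suc m + length v) ! j = (c # L @ v) ! j"
        proof (cases "j < Suc m")
          case True
          have "- int m + int j = int j - int (length a - 1)" using a L(1) by simp
          then have "x' (- int m + int j) = a ! j" using x'(3) True a L(1) by simp
          moreover have "a ! j = (c # L @ v) ! j" using True a L(1) by (cases j) (auto simp: nth_append)
          ultimately show ?thesis using wj by simp
        next
          case False
          define i' where "i' = j - Suc m"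
          have ji: "j = Suc m + i'" "i' < length v" using False j unfolding i'_def by auto
          have e: "- int m + int j = int (Suc i')" using ji by simp
          have "x' (int (Suc i')) = x (int (Suc i'))" using x'(2) unfolding y_def by blast
          then have "x' (- int m + int j) = x (int (Suc i'))" unfolding e .
          moreover have e2: "int (Suc i') = 1 - int m + int (m + i')" by simp
          moreover have "m + i' < length (L @ v)" using ji L(1) by simp
          then have "x (1 - int m + int (m + i')) = (L @ v) ! (m + i')" using x(2) by blast
          moreover have "(L @ v) ! (m + i') = v ! i'" using L(1) by (simp add: nth_append)
          moreover have "(c # L @ v) ! j = v ! i'" using ji L(1) by (simp add: nth_append)
          ultimately show ?thesis using wj by simp
        qed
      qed
      moreover have "win x' (- int m) (Suc m + length v) \<in> lang u" using x'(1) unfolding Xtilde_char by blast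
      ultimately show False using v(2) by simp
    qed
    then have "fol u a \<noteq> fol u L" using yL by blast
    then have "fol u a \<subset> fol u (tl a)" using sub a by auto
    then show "a \<in> {a. length a = n \<and> significant u a}"
      unfolding significant_def using a L(1) n al by simp
  qed
  then show ?thesis unfolding L_def m_def .
qed


end
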